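(* Let $n\ge 1$, let $K\in\mathbb{R}^{n\times n}$ be symmetric positive semidefinite, let $\Sigma_1,\Sigma_2\in\mathbb{R}^{n\times n}$ be symmetric positive definite, and let $\lambda>1$. Let $K=PLP^T$ be an eigen-decomposition with $P$ orthogonal and $L=\mathrm{diag}(l_1,\dots,l_n)$, $l_1\ge\cdots\ge l_r>l_{r+1}=\cdots=l_n=0$, $r=\mathrm{rank}(K)$. Put $\tilde L=\mathrm{diag}(1/\sqrt{l_1},\dots,1/\sqrt{l_r},1,\dots,1)$, $\tilde K=\tilde L P^T$, $\tilde\Sigma_j=\tilde K\Sigma_j\tilde K^T$ ($j=1,2$), and write in block form (with $r\times r$ upper-left blocks) $$\tilde\Sigma_j=\begin{bmatrix}A_j&B_j\\ B_j^T&C_j\end{bmatrix},\qquad \hat\Sigma_j=A_j-B_jC_j^{-1}B_j^T,\quad j=1,2.$$ Then the optimization problem $$\max_{0\preceq K_U\preceq K}\ \log|K_U+\Sigma_1|-\lambda\log|K_U+\Sigma_2|$$ (over symmetric $n\times n$ matrices $K_U$) is equivalent to the problem $$\max_{0\preceq A_U\preceq I}\ \log|A_U+\hat\Sigma_1|-\lambda\log|A_U+\hat\Sigma_2|$$ (over symmetric $r\times r$ matrices $A_U$, $I$ the $r\times r$ identity), in the sense that $K_U$ is feasible for the first problem if and only if $\tilde K K_U\tilde K^T=\begin{bmatrix}A_U&0\\0&0\end{bmatrix}$ for some $A_U$ feasible for the second problem, and under this correspondence the two objective values differ by an additive constant independent of the variable.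
   Context: $|M|$ denotes the determinant of $M$; $M\preceq N$ means $N-M$ is positive semidefinite. The matrices $\hat\Sigma_1,\hat\Sigma_2$ are positive definite (Schur complements of positive definite matrices); when $r=n$ the blocks $B_j,C_j$ are empty and $\hat\Sigma_j=\tilde\Sigma_j$. *)

theory Defs
  imports "Jordan_Normal_Form.Matrix" "Jordan_Normal_Form.Determinant"
          "Jordan_Normal_Form.Gauss_Jordan_Elimination" Complex_Main
begin

definition psd_mat :: "real mat \<Rightarrow> bool" where
  "psd_mat M \<longleftrightarrow> dim_row M = dim_col M \<and> transpose_mat M = M \<and>
     (\<forall>x \<in> carrier_vec (dim_row M). 0 \<le> x \<bullet> (M *\<^sub>v x))"

definition pd_mat :: "real mat \<Rightarrow> bool" where
  "pd_mat M \<longleftrightarrow> dim_row M = dim_col M \<and> transpose_mat M = M \<and>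
     (\<forall>x \<in> carrier_vec (dim_row M). x \<noteq> 0\<^sub>v (dim_row M) \<longrightarrow> 0 < x \<bullet> (M *\<^sub>v x))"

definition loewner_le :: "real mat \<Rightarrow> real mat \<Rightarrow> bool" where
  "loewner_le M N \<longleftrightarrow> dim_row M = dim_row N \<and> dim_col M = dim_col N \<and> psd_mat (N - M)"

definition schur_top :: "nat \<Rightarrow> real mat \<Rightarrow> real mat" where
  "schur_top r M = (case split_block M r r of (A, B, _, C) \<Rightarrow>
      A - B * the (mat_inverse C) * transpose_mat B)"

end

theory Submission
  imports Defs
begin

lemma quad_unit:
  fixes M :: "real mat"
  assumes "M \<in> carrier_mat n n" "i < n" "j < n"
  shows "unit_vec n i \<bullet> (M *\<^sub>v unit_vec n j) = M $$ (i,j)"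
  using assms by simp

lemma quad_expand:
  fixes M :: "real mat"
  assumes M: "M \<in> carrier_mat n n" and u: "u \<in> carrier_vec n" and w: "w \<in> carrier_vec n"
  shows "(u + t \<cdot>\<^sub>v w) \<bullet> (M *\<^sub>v (u + t \<cdot>\<^sub>v w)) =
     u \<bullet> (M *\<^sub>v u) + t * (u \<bullet> (M *\<^sub>v w)) + t * (w \<bullet> (M *\<^sub>v u)) + t * t * (w \<bullet> (M *\<^sub>v w))"
proof -
  have Mu: "M *\<^sub>v u \<in> carrier_vec n" and Mw: "M *\<^sub>v w \<in> carrier_vec n" using M u w by auto
  have "M *\<^sub>v (u + t \<cdot>\<^sub>v w) = M *\<^sub>v u + t \<cdot>\<^sub>v (M *\<^sub>v w)"
    using M u w by (simp add: mult_add_distrib_mat_vec mult_mat_vec)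
  then have "(u + t \<cdot>\<^sub>v w) \<bullet> (M *\<^sub>v (u + t \<cdot>\<^sub>v w)) =
     (u + t \<cdot>\<^sub>v w) \<bullet> (M *\<^sub>v u + t \<cdot>\<^sub>v (M *\<^sub>v w))" by simp
  also have "\<dots> = u \<bullet> (M *\<^sub>v u + t \<cdot>\<^sub>v (M *\<^sub>v w)) + (t \<cdot>\<^sub>v w) \<bullet> (M *\<^sub>v u + t \<cdot>\<^sub>v (M *\<^sub>v w))"
    using u w Mu Mw by (simp add: add_scalar_prod_distrib[of _ n])
  also have "\<dots> = u \<bullet> (M *\<^sub>v u) + t * (u \<bullet> (M *\<^sub>v w)) + t * (w \<bullet> (M *\<^sub>v u)) + t * t * (w \<bullet> (M *\<^sub>v w))"
    using u w Mu Mw by (simp add: scalar_prod_add_distrib[of _ n] algebra_simps)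
  finally show ?thesis .
qed

lemma psd_zero_diag:
  fixes M :: "real mat"
  assumes M: "M \<in> carrier_mat n n" and p: "psd_mat M" and i: "i < n" and j: "j < n"
    and z: "M $$ (i,i) = 0"
  shows "M $$ (i,j) = 0"
proof (rule ccontr)
  assume nz: "M $$ (i,j) \<noteq> 0"
  have sym: "M $$ (j,i) = M $$ (i,j)"
    using p M i j unfolding psd_mat_def by (metis index_transpose_mat(1) carrier_matD)
  define t where "t = - (M $$ (j,j) + 1) / (2 * M $$ (i,j))"
  have "0 \<le> (unit_vec n j + t \<cdot>\<^sub>v unit_vec n i) \<bullet> (M *\<^sub>v (unit_vec n j + t \<cdot>\<^sub>v unit_vec n i))"
    using p M unfolding psd_mat_def by auto
  also have "\<dots> = M $$ (j,j) + t * M $$ (j,i) + t * M $$ (i,j) + t * t * M $$ (i,i)"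
    by (subst quad_expand[OF M], insert M i j, auto)
  also have "\<dots> = -1" using nz z sym unfolding t_def by (simp add: field_simps)
  finally show False by simp
qed

lemma sym_congr:
  fixes M A :: "real mat"
  assumes M: "M \<in> carrier_mat n n" and A: "A \<in> carrier_mat m n" and sym: "transpose_mat M = M"
  shows "transpose_mat (A * M * transpose_mat A) = A * M * transpose_mat A"
proof -
  have AM: "A * M \<in> carrier_mat m n" using A M by auto
  have "transpose_mat (A * M * transpose_mat A) = transpose_mat (transpose_mat A) * transpose_mat (A * M)"
    using transpose_mult[OF AM, of "transpose_mat A" m] A by auto
  also have "\<dots> = A * (transpose_mat M * transpose_mat A)"
    using transpose_mult[OF A M] by simp
  also have "\<dots> = A * M * transpose_mat A" using sym A M by (simp add: assoc_mult_mat[of _ m n _ n _ m])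
  finally show ?thesis .
qed

lemma psd_congr:
  fixes M A :: "real mat"
  assumes M: "M \<in> carrier_mat n n" and p: "psd_mat M" and A: "A \<in> carrier_mat m n"
  shows "psd_mat (A * M * transpose_mat A)"
proof -
  have sym: "transpose_mat M = M" using p unfolding psd_mat_def by auto
  have T: "transpose_mat (A * M * transpose_mat A) = A * M * transpose_mat A"
    using sym_congr[OF M A sym] .
  have "0 \<le> x \<bullet> ((A * M * transpose_mat A) *\<^sub>v x)" if x: "x \<in> carrier_vec m" for x
  proof -
    have "(A * M * transpose_mat A) *\<^sub>v x = A *\<^sub>v (M *\<^sub>v (transpose_mat A *\<^sub>v x))"
      using M A x by (simp add: assoc_mult_mat_vec[of _ m n _ m] assoc_mult_mat_vec[of _ n n _ m])
    then have "x \<bullet> ((A * M * transpose_mat A) *\<^sub>v x) = (transpose_mat A *\<^sub>v x) \<bullet> (M *\<^sub>v (transpose_mat A *\<^sub>v x))"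
      using transpose_vec_mult_scalar[OF A, of "M *\<^sub>v (transpose_mat A *\<^sub>v x)" x] M A x by simp
    also have "\<dots> \<ge> 0"
    proof -
      have y: "transpose_mat A *\<^sub>v x \<in> carrier_vec (dim_row M)" using A M x by auto
      show ?thesis using p y unfolding psd_mat_def by blast
    qed
    finally show ?thesis by simp
  qed
  then show ?thesis unfolding psd_mat_def using T A M by auto
qed

lemma pd_congr:
  fixes M A :: "real mat"
  assumes M: "M \<in> carrier_mat n n" and p: "pd_mat M" and A: "A \<in> carrier_mat m n"
    and inj: "\<And>x. x \<in> carrier_vec m \<Longrightarrow> x \<noteq> 0\<^sub>v m \<Longrightarrow> transpose_mat A *\<^sub>v x \<noteq> 0\<^sub>v n"
  shows "pd_mat (A * M * transpose_mat A)"
proof -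
  have sym: "transpose_mat M = M" using p unfolding pd_mat_def by auto
  have T: "transpose_mat (A * M * transpose_mat A) = A * M * transpose_mat A"
    using sym_congr[OF M A sym] .
  have "0 < x \<bullet> ((A * M * transpose_mat A) *\<^sub>v x)" if x: "x \<in> carrier_vec m" "x \<noteq> 0\<^sub>v m" for x
  proof -
    have "(A * M * transpose_mat A) *\<^sub>v x = A *\<^sub>v (M *\<^sub>v (transpose_mat A *\<^sub>v x))"
      using M A x by (simp add: assoc_mult_mat_vec[of _ m n _ m] assoc_mult_mat_vec[of _ n n _ m])
    then have "x \<bullet> ((A * M * transpose_mat A) *\<^sub>v x) = (transpose_mat A *\<^sub>v x) \<bullet> (M *\<^sub>v (transpose_mat A *\<^sub>v x))"
      using transpose_vec_mult_scalar[OF A, of "M *\<^sub>v (transpose_mat A *\<^sub>v x)" x] M A x by simp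
    also have "\<dots> > 0"
    proof -
      have y: "transpose_mat A *\<^sub>v x \<in> carrier_vec (dim_row M)" using A M x by auto
      show ?thesis using p y inj[OF x] M unfolding pd_mat_def by auto
    qed
    finally show ?thesis by simp
  qed
  then show ?thesis unfolding pd_mat_def using T A M by auto
qed


abbreviation B0 :: "nat \<Rightarrow> real mat \<Rightarrow> real mat" where
  "B0 m A \<equiv> four_block_mat A (0\<^sub>m (dim_row A) m) (0\<^sub>m m (dim_row A)) (0\<^sub>m m m)"

lemma zero_app: "0\<^sub>v r @\<^sub>v 0\<^sub>v m = (0\<^sub>v (r+m) :: real vec)"
  by (rule eq_vecI, auto)

lemma block0_mult_vec:
  fixes A :: "real mat"
  assumes A: "A \<in> carrier_mat r r" and x: "x \<in> carrier_vec r" and y: "y \<in> carrier_vec m"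
  shows "(x @\<^sub>v y) \<bullet> (B0 m A *\<^sub>v (x @\<^sub>v y)) = x \<bullet> (A *\<^sub>v x)"
proof -
  have dr: "dim_row A = r" using A by auto
  have "B0 m A *\<^sub>v (x @\<^sub>v y) = (A *\<^sub>v x + 0\<^sub>m r m *\<^sub>v y) @\<^sub>v (0\<^sub>m m r *\<^sub>v x + 0\<^sub>m m m *\<^sub>v y)"
    unfolding dr by (rule four_block_mat_mult_vec[OF A _ _ _ x y], auto)
  also have "\<dots> = (A *\<^sub>v x) @\<^sub>v 0\<^sub>v m" using A x y by auto
  finally show ?thesis using A x y by (simp add: scalar_prod_append[of _ r _ m])
qed

lemma psd_block0:
  fixes A :: "real mat"
  assumes A: "A \<in> carrier_mat r r"
  shows "psd_mat (B0 m A) \<longleftrightarrow> psd_mat A"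
proof -
  have dr: "dim_row A = r" using A by auto
  have BT: "transpose_mat (B0 m A) = B0 m (transpose_mat A)"
    using A by (subst transpose_four_block_mat[OF A], auto)
  have Bc: "B0 m A \<in> carrier_mat (r+m) (r+m)" using A by auto
  show ?thesis
  proof
    assume p: "psd_mat (B0 m A)"
    have sym: "transpose_mat A = A"
    proof (rule eq_matI)
      fix i j assume ij: "i < dim_row A" "j < dim_col A"
      have Teq: "transpose_mat (B0 m A) = B0 m A" using p unfolding psd_mat_def by blast
      have "(transpose_mat (B0 m A)) $$ (i,j) = B0 m A $$ (i,j)" by (simp only: Teq)
      then show "transpose_mat A $$ (i,j) = A $$ (i,j)" using ij A by simp
    qed (insert A, auto)
    have "0 \<le> x \<bullet> (A *\<^sub>v x)" if x: "x \<in> carrier_vec r" for x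
    proof -
      have "x @\<^sub>v 0\<^sub>v m \<in> carrier_vec (dim_row (B0 m A))" using x A by auto
      then have "0 \<le> (x @\<^sub>v 0\<^sub>v m) \<bullet> (B0 m A *\<^sub>v (x @\<^sub>v 0\<^sub>v m))" using p unfolding psd_mat_def by blast
      then show ?thesis using block0_mult_vec[OF A x, of "0\<^sub>v m" m] by simp
    qed
    then show "psd_mat A" unfolding psd_mat_def using A sym by auto
  next
    assume p: "psd_mat A"
    have "0 \<le> x \<bullet> (B0 m A *\<^sub>v x)" if x: "x \<in> carrier_vec (r+m)" for x
    proof -
      have "x = vec_first x r @\<^sub>v vec_last x m" using x by simp
      then have "x \<bullet> (B0 m A *\<^sub>v x) = vec_first x r \<bullet> (A *\<^sub>v vec_first x r)"
        using block0_mult_vec[OF A, of "vec_first x r" "vec_last x m" m] by simp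
      also have "\<dots> \<ge> 0" using p A unfolding psd_mat_def by auto
      finally show ?thesis .
    qed
    moreover have "transpose_mat (B0 m A) = B0 m A" using BT p dr unfolding psd_mat_def by simp
    ultimately show "psd_mat (B0 m A)" unfolding psd_mat_def using Bc A by auto
  qed
qed

lemma pd_lower_block:
  fixes A B C D :: "real mat"
  assumes A: "A \<in> carrier_mat r r" and B: "B \<in> carrier_mat r m" and C: "C \<in> carrier_mat m r"
    and D: "D \<in> carrier_mat m m" and p: "pd_mat (four_block_mat A B C D)"
  shows "pd_mat D"
proof -
  let ?M = "four_block_mat A B C D"
  have sym: "transpose_mat D = D"
  proof (rule eq_matI)
    fix i j assume ij: "i < dim_row D" "j < dim_col D"
    have Teq: "transpose_mat ?M = ?M" using p unfolding pd_mat_def by blast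
    have "(transpose_mat ?M) $$ (i+r,j+r) = ?M $$ (i+r,j+r)" by (simp only: Teq)
    then show "transpose_mat D $$ (i,j) = D $$ (i,j)" using ij A B C D by simp
  qed (insert D, auto)
  have "0 < y \<bullet> (D *\<^sub>v y)" if y: "y \<in> carrier_vec m" "y \<noteq> 0\<^sub>v m" for y
  proof -
    have xc: "0\<^sub>v r @\<^sub>v y \<in> carrier_vec (dim_row ?M)" using y A D by auto
    have xnz: "0\<^sub>v r @\<^sub>v y \<noteq> 0\<^sub>v (dim_row ?M)"
      using y A D zero_app[of r m] append_vec_eq[of "0\<^sub>v r" r "0\<^sub>v r" y "0\<^sub>v m"] by auto
    have "0 < (0\<^sub>v r @\<^sub>v y) \<bullet> (?M *\<^sub>v (0\<^sub>v r @\<^sub>v y))" using p xc xnz unfolding pd_mat_def by blast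
    also have "?M *\<^sub>v (0\<^sub>v r @\<^sub>v y) = (A *\<^sub>v 0\<^sub>v r + B *\<^sub>v y) @\<^sub>v (C *\<^sub>v 0\<^sub>v r + D *\<^sub>v y)"
      by (rule four_block_mat_mult_vec[OF A B C D], insert y, auto)
    also have "(0\<^sub>v r @\<^sub>v y) \<bullet> \<dots> = 0\<^sub>v r \<bullet> (A *\<^sub>v 0\<^sub>v r + B *\<^sub>v y) + y \<bullet> (C *\<^sub>v 0\<^sub>v r + D *\<^sub>v y)"
      by (rule scalar_prod_append[of _ r _ m], insert y A B C D, auto)
    also have "\<dots> = y \<bullet> (D *\<^sub>v y)"
    proof -
      have "C *\<^sub>v 0\<^sub>v r = 0\<^sub>v m" by (rule eq_vecI, insert C, auto)
      moreover have "D *\<^sub>v y \<in> carrier_vec m" using D y by auto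
      ultimately show ?thesis using y A B C D by simp
    qed
    finally show ?thesis .
  qed
  then show ?thesis unfolding pd_mat_def using D sym by auto
qed


lemma schur_det:
  fixes A B B' C Ci :: "real mat"
  assumes A: "A \<in> carrier_mat r r" and B: "B \<in> carrier_mat r m" and B': "B' \<in> carrier_mat m r"
    and C: "C \<in> carrier_mat m m" and Ci: "Ci \<in> carrier_mat m m" and CiC: "Ci * C = 1\<^sub>m m"
  shows "det (four_block_mat A B B' C) = det C * det (A - B * Ci * B')"
proof -
  define S where "S = A - B * Ci * B'"
  have BCi: "B * Ci \<in> carrier_mat r m" using B Ci by auto
  have S: "S \<in> carrier_mat r r" using A B Ci B' unfolding S_def by auto
  have prod: "four_block_mat (1\<^sub>m r) (B * Ci) (0\<^sub>m m r) (1\<^sub>m m) * four_block_mat S (0\<^sub>m r m) B' C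
     = four_block_mat (1\<^sub>m r * S + B * Ci * B') (1\<^sub>m r * 0\<^sub>m r m + B * Ci * C)
        (0\<^sub>m m r * S + 1\<^sub>m m * B') (0\<^sub>m m r * 0\<^sub>m r m + 1\<^sub>m m * C)"
    by (rule mult_four_block_mat[OF _ BCi _ _ S _ B' C], auto)
  have e1: "1\<^sub>m r * S + B * Ci * B' = A"
    using S A B Ci B' unfolding S_def by (intro eq_matI, auto)
  have e2: "1\<^sub>m r * 0\<^sub>m r m + B * Ci * C = B"
  proof -
    have "B * Ci * C = B * (Ci * C)" using B Ci C by auto
    also have "\<dots> = B" using CiC B by simp
    finally show ?thesis using B by simp
  qed
  have e3: "0\<^sub>m m r * S + 1\<^sub>m m * B' = B'" using S B' by simp
  have e4: "0\<^sub>m m r * 0\<^sub>m r m + 1\<^sub>m m * C = C" using C by simp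
  have "four_block_mat A B B' C = four_block_mat (1\<^sub>m r) (B * Ci) (0\<^sub>m m r) (1\<^sub>m m) * four_block_mat S (0\<^sub>m r m) B' C"
    unfolding prod e1 e2 e3 e4 ..
  then have "det (four_block_mat A B B' C) = det (four_block_mat (1\<^sub>m r) (B * Ci) (0\<^sub>m m r) (1\<^sub>m m)) * det (four_block_mat S (0\<^sub>m r m) B' C)"
    by (simp add: det_mult[of _ "r+m"] BCi S B' C)
  also have "det (four_block_mat (1\<^sub>m r) (B * Ci) (0\<^sub>m m r) (1\<^sub>m m)) = 1"
    by (subst det_four_block_mat_lower_left_zero[OF _ BCi], auto)
  also have "det (four_block_mat S (0\<^sub>m r m) B' C) = det S * det C"
    by (rule det_four_block_mat_upper_right_zero[OF S _ B' C], simp)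
  finally show ?thesis unfolding S_def by simp
qed

lemma pd_det_nonzero:
  fixes M :: "real mat"
  assumes M: "M \<in> carrier_mat n n" and p: "pd_mat M"
  shows "det M \<noteq> 0"
proof
  assume "det M = 0"
  then obtain v where v: "v \<in> carrier_vec n" "v \<noteq> 0\<^sub>v n" "M *\<^sub>v v = 0\<^sub>v n"
    using det_0_iff_vec_prod_zero_field[OF M] by auto
  have "0 < v \<bullet> (M *\<^sub>v v)" using p v M unfolding pd_mat_def by auto
  then show False using v by simp
qed


lemma self_scalar_pos:
  fixes x :: "real vec"
  assumes x: "x \<in> carrier_vec n" "x \<noteq> 0\<^sub>v n"
  shows "0 < x \<bullet> x"
proof -
  obtain i where i: "i < n" "x $ i \<noteq> 0" using x by (metis eq_vecI carrier_vecD index_zero_vec(1) index_zero_vec(2))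
  have "x \<bullet> x = (\<Sum>k\<in>{0..<n}. x $ k * x $ k)" using x unfolding scalar_prod_def by simp
  also have "\<dots> \<ge> x $ i * x $ i" by (rule member_le_sum, insert i, auto)
  moreover have "x $ i * x $ i > 0" using i not_real_square_gt_zero by blast
  ultimately show ?thesis by linarith
qed

lemma smult_mat_vec:
  fixes A :: "real mat"
  assumes "v \<in> carrier_vec (dim_col A)"
  shows "(k \<cdot>\<^sub>m A) *\<^sub>v v = k \<cdot>\<^sub>v (A *\<^sub>v v)"
  by (rule eq_vecI, insert assms, auto simp: scalar_prod_def sum_distrib_left ac_simps intro!: sum.cong)

lemma pd_convex_id:
  fixes M :: "real mat"
  assumes M: "M \<in> carrier_mat n n" and p: "pd_mat M" and t: "0 \<le> t" "t \<le> 1"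
  shows "pd_mat (t \<cdot>\<^sub>m M + (1 - t) \<cdot>\<^sub>m 1\<^sub>m n)"
proof -
  let ?N = "t \<cdot>\<^sub>m M + (1 - t) \<cdot>\<^sub>m 1\<^sub>m n"
  have N: "?N \<in> carrier_mat n n" using M by auto
  have sym: "transpose_mat M = M" using p unfolding pd_mat_def by auto
  have symN: "transpose_mat ?N = ?N"
  proof (rule eq_matI)
    fix i j assume "i < dim_row ?N" "j < dim_col ?N"
    then have ij: "i < n" "j < n" using M by auto
    have "M $$ (j,i) = M $$ (i,j)" using sym ij M by (metis carrier_matD index_transpose_mat(1))
    then show "transpose_mat ?N $$ (i,j) = ?N $$ (i,j)" using ij M by auto
  qed (insert M, auto)
  have "0 < x \<bullet> (?N *\<^sub>v x)" if x: "x \<in> carrier_vec n" "x \<noteq> 0\<^sub>v n" for x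
  proof -
    have "?N *\<^sub>v x = t \<cdot>\<^sub>v (M *\<^sub>v x) + (1 - t) \<cdot>\<^sub>v x"
      using M x by (simp add: add_mult_distrib_mat_vec[of _ n n] smult_mat_vec)
    then have "x \<bullet> (?N *\<^sub>v x) = t * (x \<bullet> (M *\<^sub>v x)) + (1 - t) * (x \<bullet> x)"
      using M x by (simp add: scalar_prod_add_distrib[of _ n])
    moreover have "0 < x \<bullet> (M *\<^sub>v x)" using p x M unfolding pd_mat_def by auto
    moreover have "0 < x \<bullet> x" by (rule self_scalar_pos[OF x])
    ultimately show ?thesis using t
      by (smt (verit) mult_nonneg_nonneg mult_pos_pos)
  qed
  then show ?thesis unfolding pd_mat_def using N symN by auto
qed

lemma pd_det_pos:
  fixes M :: "real mat"
  assumes M: "M \<in> carrier_mat n n" and p: "pd_mat M"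
  shows "det M > 0"
proof (rule ccontr)
  assume neg: "\<not> det M > 0"
  define f where "f = (\<lambda>t::real. \<Sum>q\<in>{q. q permutes {0..<n}}. signof q *
      (\<Prod>i = 0..<n. t * M $$ (i, q i) + (1 - t) * (if i = q i then 1 else 0)))"
  have fdet: "f t = det (t \<cdot>\<^sub>m M + (1 - t) \<cdot>\<^sub>m 1\<^sub>m n)" for t
  proof -
    have "det (t \<cdot>\<^sub>m M + (1 - t) \<cdot>\<^sub>m 1\<^sub>m n) = (\<Sum>q\<in>{q. q permutes {0..<n}}. signof q *
      (\<Prod>i = 0..<n. (t \<cdot>\<^sub>m M + (1 - t) \<cdot>\<^sub>m 1\<^sub>m n) $$ (i, q i)))"
      unfolding det_def using M by simp
    also have "\<dots> = f t" unfolding f_def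
    proof (rule sum.cong[OF refl], rule arg_cong[where f = "\<lambda>x. _ * x"], rule prod.cong[OF refl])
      fix q i assume q: "q \<in> {q. q permutes {0..<n}}" and i: "i \<in> {0..<n}"
      have "q i < n" using q i by (simp add: permutes_in_image)
      then show "(t \<cdot>\<^sub>m M + (1 - t) \<cdot>\<^sub>m 1\<^sub>m n) $$ (i, q i) = t * M $$ (i, q i) + (1 - t) * (if i = q i then 1 else 0)"
        using i M by auto
    qed
    finally show ?thesis by simp
  qed
  have cont: "continuous_on {0..1} f" unfolding f_def by (intro continuous_intros)
  have "0 \<cdot>\<^sub>m M + (1 - 0) \<cdot>\<^sub>m 1\<^sub>m n = (1\<^sub>m n :: real mat)" using M by (intro eq_matI, auto)
  then have f0: "f 0 = 1" using fdet[of 0] by simp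
  have "1 \<cdot>\<^sub>m M + (1 - 1) \<cdot>\<^sub>m 1\<^sub>m n = M" using M by (intro eq_matI, auto)
  then have f1: "f 1 = det M" using fdet[of 1] by simp
  obtain t where t: "0 \<le> t" "t \<le> 1" "f t = 0"
    using IVT2'[of f 1 0 0] cont f0 f1 neg by force
  have "det (t \<cdot>\<^sub>m M + (1 - t) \<cdot>\<^sub>m 1\<^sub>m n) \<noteq> 0"
    by (rule pd_det_nonzero[OF _ pd_convex_id[OF M p t(1,2)]], insert M, auto)
  then show False using t fdet by simp
qed


definition lowblk :: "nat \<Rightarrow> real mat \<Rightarrow> real mat" where
  "lowblk r M = snd (snd (snd (split_block M r r)))"

lemma schur_block_det:
  fixes St AU :: "real mat"
  assumes St: "St \<in> carrier_mat (r+m) (r+m)" and p: "pd_mat St" and AU: "AU \<in> carrier_mat r r"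
  shows "det (B0 m AU + St) = det (lowblk r St) * det (AU + schur_top r St)"
    "det (lowblk r St) > 0"
    "schur_top r St \<in> carrier_mat r r"
proof -
  obtain A1 B1 B1' C1 where sb: "split_block St r r = (A1,B1,B1',C1)" by (metis prod_cases4)
  have dims: "dim_row St = r + m" "dim_col St = r + m" using St by auto
  note spl = split_block[OF sb dims]
  have low: "lowblk r St = C1" unfolding lowblk_def sb by simp
  have symSt: "transpose_mat St = St" using p unfolding pd_mat_def by auto
  have B1': "B1' = transpose_mat B1"
  proof -
    have e1: "B1 = mat r m (\<lambda>(i,j). St $$ (i, j+r))" and e2: "B1' = mat m r (\<lambda>(i,j). St $$ (i+r, j))"
      using sb dims unfolding split_block_def Let_def by auto
    show ?thesis
    proof (rule eq_matI)
      fix i j assume ij: "i < dim_row (transpose_mat B1)" "j < dim_col (transpose_mat B1)"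
      then have ij': "i < m" "j < r" using e1 by auto
      have "St $$ (i+r, j) = St $$ (j, i+r)" using symSt ij' St
        by (metis add.commute carrier_matD(1) carrier_matD(2) index_transpose_mat(1) nat_add_left_cancel_less trans_less_add1)
      then show "B1' $$ (i,j) = transpose_mat B1 $$ (i,j)" using e1 e2 ij' by auto
    qed (insert e1 e2, auto)
  qed
  have pC1: "pd_mat C1" using pd_lower_block[OF spl(1-4)] spl(5) p by simp
  have dC1: "det C1 > 0" by (rule pd_det_pos[OF spl(4) pC1])
  have U: "C1 \<in> Units (ring_mat TYPE(real) m ())"
    by (rule det_non_zero_imp_unit[OF spl(4)], insert dC1, simp)
  have "mat_inverse C1 \<noteq> None" using mat_inverse(1)[OF spl(4), where b="()"] U by auto
  then obtain Ci where inv: "mat_inverse C1 = Some Ci" by auto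
  note invp = mat_inverse(2)[OF spl(4) inv]
  have sch: "schur_top r St = A1 - B1 * Ci * transpose_mat B1"
    unfolding schur_top_def sb using inv by simp
  show "schur_top r St \<in> carrier_mat r r" unfolding sch using spl invp by auto
  have sum: "B0 m AU + St = four_block_mat (AU + A1) B1 B1' C1"
  proof -
    have "B0 m AU + St = four_block_mat (AU + A1) (0\<^sub>m r m + B1) (0\<^sub>m m r + B1') (0\<^sub>m m m + C1)"
      unfolding spl(5) using AU spl(1-4) by (subst add_four_block_mat[of _ r r _ m _ m], auto)
    then show ?thesis using spl(1-4) by simp
  qed
  have "det (B0 m AU + St) = det C1 * det (AU + A1 - B1 * Ci * B1')"
    unfolding sum by (rule schur_det[of _ r _ m], insert AU spl invp, auto)
  also have "AU + A1 - B1 * Ci * B1' = AU + schur_top r St"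
    unfolding sch B1' using AU spl invp by (intro eq_matI, auto)
  finally show "det (B0 m AU + St) = det (lowblk r St) * det (AU + schur_top r St)" unfolding low .
  show "det (lowblk r St) > 0" unfolding low by fact
qed


lemma congr_cancel:
  fixes Ki Kt M :: "real mat"
  assumes Ki: "Ki \<in> carrier_mat n n" and Kt: "Kt \<in> carrier_mat n n" and M: "M \<in> carrier_mat n n"
    and KK: "Ki * Kt = 1\<^sub>m n"
  shows "Ki * (Kt * M * transpose_mat Kt) * transpose_mat Ki = M"
proof -
  have T: "transpose_mat Kt * transpose_mat Ki = 1\<^sub>m n"
    using transpose_mult[OF Ki Kt] KK by simp
  have "Ki * (Kt * M * transpose_mat Kt) * transpose_mat Ki = (Ki * Kt) * M * (transpose_mat Kt * transpose_mat Ki)"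
    using Ki Kt M by (simp add: assoc_mult_mat[of _ n n _ n _ n])
  also have "\<dots> = M" unfolding KK T using M by simp
  finally show ?thesis .
qed

lemma congr_plus:
  fixes A M N :: "real mat"
  assumes A: "A \<in> carrier_mat k n" and M: "M \<in> carrier_mat n n" and N: "N \<in> carrier_mat n n"
  shows "A * (M + N) * transpose_mat A = A * M * transpose_mat A + A * N * transpose_mat A"
  using A M N by (simp add: mult_add_distrib_mat[of _ k n] add_mult_distrib_mat[of _ k n])

lemma congr_minus:
  fixes A M N :: "real mat"
  assumes A: "A \<in> carrier_mat k n" and M: "M \<in> carrier_mat n n" and N: "N \<in> carrier_mat n n"
  shows "A * (M - N) * transpose_mat A = A * M * transpose_mat A - A * N * transpose_mat A"
  using A M N by (simp add: mult_minus_distrib_mat[of _ k n] minus_mult_distrib_mat[of _ k n])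

lemma det_congr:
  fixes A M :: "real mat"
  assumes A: "A \<in> carrier_mat n n" and M: "M \<in> carrier_mat n n"
  shows "det (A * M * transpose_mat A) = det A * det M * det A"
  using A M by (simp add: det_mult[of _ n] det_transpose)

lemma psd_pd_add:
  fixes M N :: "real mat"
  assumes M: "M \<in> carrier_mat n n" and N: "N \<in> carrier_mat n n" and p: "psd_mat M" and q: "pd_mat N"
  shows "pd_mat (M + N)"
proof -
  have T: "transpose_mat (M + N) = M + N"
    using p q M N unfolding psd_mat_def pd_mat_def by (simp add: transpose_add)
  have "0 < x \<bullet> ((M + N) *\<^sub>v x)" if x: "x \<in> carrier_vec n" "x \<noteq> 0\<^sub>v n" for x
  proof -
    have "x \<bullet> ((M + N) *\<^sub>v x) = x \<bullet> (M *\<^sub>v x) + x \<bullet> (N *\<^sub>v x)"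
      using M N x by (simp add: add_mult_distrib_mat_vec[of _ n n] scalar_prod_add_distrib[of _ n])
    moreover have "0 \<le> x \<bullet> (M *\<^sub>v x)" using p M x unfolding psd_mat_def by auto
    moreover have "0 < x \<bullet> (N *\<^sub>v x)" using q N x unfolding pd_mat_def by auto
    ultimately show ?thesis by simp
  qed
  then show ?thesis unfolding pd_mat_def using T M N by auto
qed



declare minus_carrier_mat[simp]

theorem proposition1:
  fixes n r :: nat and K Sigma1 Sigma2 P Lt Kt St1 St2 Sh1 Sh2 :: "real mat"
    and l :: "nat \<Rightarrow> real" and lam :: real
  assumes "n \<ge> 1"
    and "K \<in> carrier_mat n n" and "psd_mat K"
    and "Sigma1 \<in> carrier_mat n n" and "pd_mat Sigma1"
    and "Sigma2 \<in> carrier_mat n n" and "pd_mat Sigma2"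
    and "lam > 1"
    and "P \<in> carrier_mat n n" and "transpose_mat P * P = 1\<^sub>m n" and "P * transpose_mat P = 1\<^sub>m n"
    and "K = P * mat_diag n l * transpose_mat P"
    and "r \<le> n"
    and "\<And>i. i + 1 < r \<Longrightarrow> l (i + 1) \<le> l i"
    and "\<And>i. i < r \<Longrightarrow> l i > 0"
    and "\<And>i. r \<le> i \<Longrightarrow> i < n \<Longrightarrow> l i = 0"
    and "Lt = mat_diag n (\<lambda>i. if i < r then 1 / sqrt (l i) else 1)"
    and "Kt = Lt * transpose_mat P"
    and "St1 = Kt * Sigma1 * transpose_mat Kt"
    and "St2 = Kt * Sigma2 * transpose_mat Kt"
    and "Sh1 = schur_top r St1"
    and "Sh2 = schur_top r St2"
  shows
    "(\<forall>KU \<in> carrier_mat n n.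
        (psd_mat KU \<and> loewner_le KU K) \<longleftrightarrow>
        (\<exists>AU \<in> carrier_mat r r. psd_mat AU \<and> loewner_le AU (1\<^sub>m r) \<and>
           Kt * KU * transpose_mat Kt =
             four_block_mat AU (0\<^sub>m r (n - r)) (0\<^sub>m (n - r) r) (0\<^sub>m (n - r) (n - r))))
     \<and> (\<exists>c :: real. \<forall>KU \<in> carrier_mat n n. \<forall>AU \<in> carrier_mat r r.
        psd_mat KU \<and> loewner_le KU K \<and> psd_mat AU \<and> loewner_le AU (1\<^sub>m r) \<and>
        Kt * KU * transpose_mat Kt =
          four_block_mat AU (0\<^sub>m r (n - r)) (0\<^sub>m (n - r) r) (0\<^sub>m (n - r) (n - r))
        \<longrightarrow> ln (det (KU + Sigma1)) - lam * ln (det (KU + Sigma2))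
            = ln (det (AU + Sh1)) - lam * ln (det (AU + Sh2)) + c)"
proof -
  note a = assms
  define m where "m = n - r"
  have nrm: "n = r + m" using a(13) unfolding m_def by simp
  have P: "P \<in> carrier_mat n n" by fact
  have Lt: "Lt \<in> carrier_mat n n" using a(17) by simp
  define Li where "Li = mat_diag n (\<lambda>i. if i < r then sqrt (l i) else (1::real))"
  have Li: "Li \<in> carrier_mat n n" unfolding Li_def by simp
  have fun1: "(\<lambda>i. (if i < r then 1 / sqrt (l i) else 1) * (if i < r then sqrt (l i) else (1::real))) = (\<lambda>i. 1)"
    by (auto simp: fun_eq_iff) (metis a(15) less_irrefl)
  have fun2: "(\<lambda>i. (if i < r then sqrt (l i) else 1) * (if i < r then 1 / sqrt (l i) else (1::real))) = (\<lambda>i. 1)"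
    using fun1 by (simp add: fun_eq_iff mult.commute)
  have LtLi: "Lt * Li = 1\<^sub>m n" unfolding a(17) Li_def mat_diag_diag fun1 by simp
  have LiLt: "Li * Lt = 1\<^sub>m n" unfolding a(17) Li_def mat_diag_diag fun2 by simp
  have LtT: "transpose_mat Lt = Lt" unfolding a(17) by (rule eq_matI, auto simp: mat_diag_def)
  have Kt: "Kt \<in> carrier_mat n n" using a(18) Lt P by simp
  define Ki where "Ki = P * Li"
  have Ki: "Ki \<in> carrier_mat n n" unfolding Ki_def using P Li by simp
  have KtKi: "Kt * Ki = 1\<^sub>m n"
  proof -
    have "Kt * Ki = Lt * ((transpose_mat P * P) * Li)" unfolding a(18) Ki_def using Lt P Li
      by (simp add: assoc_mult_mat[of _ n n _ n _ n])
    also have "\<dots> = 1\<^sub>m n" unfolding a(10) using Li LtLi by simp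
    finally show ?thesis .
  qed
  have KiKt: "Ki * Kt = 1\<^sub>m n"
  proof -
    have "Ki * Kt = P * (Li * Lt) * transpose_mat P" unfolding a(18) Ki_def using Lt P Li
      by (simp add: assoc_mult_mat[of _ n n _ n _ n])
    also have "\<dots> = 1\<^sub>m n" unfolding LiLt using P a(11) by simp
    finally show ?thesis .
  qed
  define D where "D = Kt * K * transpose_mat Kt"
  have KtT: "transpose_mat Kt = P * Lt" unfolding a(18) using transpose_mult[OF Lt, of "transpose_mat P" n] P LtT by simp
  have dl: "mat_diag n l \<in> carrier_mat n n" by simp
  have cl: "\<And>A B. A \<in> carrier_mat n n \<Longrightarrow> B \<in> carrier_mat n n \<Longrightarrow> A * B \<in> carrier_mat n n"
    "\<And>A. A \<in> carrier_mat n n \<Longrightarrow> transpose_mat A \<in> carrier_mat n n" by auto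
  have "D = Lt * (transpose_mat P * P) * mat_diag n l * (transpose_mat P * P) * Lt"
    unfolding D_def KtT unfolding a(18) a(12) using P Lt dl by (simp add: assoc_mult_mat[of _ n n _ n _ n] cl)
  also have "\<dots> = Lt * mat_diag n l * Lt" unfolding a(10) using Lt right_mult_one_mat[of "Lt * mat_diag n l" n n] by (simp add: cl)
  also have "\<dots> = mat_diag n (\<lambda>i. ((if i < r then 1 / sqrt (l i) else 1) * l i) * (if i < r then 1 / sqrt (l i) else 1))"
    unfolding a(17) mat_diag_diag ..
  also have "\<dots> = B0 m (1\<^sub>m r)"
  proof (rule eq_matI)
    fix i j assume ij: "i < dim_row (B0 m (1\<^sub>m r))" "j < dim_col (B0 m (1\<^sub>m r))"
    then have ij': "i < n" "j < n" using nrm by auto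
    show "mat_diag n (\<lambda>i. ((if i < r then 1 / sqrt (l i) else 1) * l i) * (if i < r then 1 / sqrt (l i) else 1)) $$ (i,j)
      = B0 m (1\<^sub>m r) $$ (i,j)"
    proof (cases "i < r")
      case True
      have "l i > 0" using a(15) True by simp
      then have "1 / sqrt (l i) * l i * (1 / sqrt (l i)) = 1"
        by (simp add: field_simps)
      then show ?thesis using True ij' nrm unfolding mat_diag_def by auto
    next
      case False
      then show ?thesis using ij' nrm a(16)[of i] unfolding mat_diag_def by auto
    qed
  qed (insert nrm, auto simp: mat_diag_def)
  finally have D: "D = B0 m (1\<^sub>m r)" .
  have KtT': "transpose_mat Kt \<in> carrier_mat n n" using Kt by simp
  have X: "Kt * M * transpose_mat Kt \<in> carrier_mat n n" if "M \<in> carrier_mat n n" for M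
    using Kt that by simp
  have Dc: "D \<in> carrier_mat n n" unfolding D_def using Kt a(2) by simp
  have B0eq: "four_block_mat AU (0\<^sub>m r m) (0\<^sub>m m r) (0\<^sub>m m m) = B0 m AU" if "AU \<in> carrier_mat r r" for AU
    using that by simp
  have Dii: "D $$ (i,i) = 0" if "r \<le> i" "i < n" for i using that nrm unfolding D by simp
  have part1: "(psd_mat KU \<and> loewner_le KU K) \<longleftrightarrow>
        (\<exists>AU \<in> carrier_mat r r. psd_mat AU \<and> loewner_le AU (1\<^sub>m r) \<and>
           Kt * KU * transpose_mat Kt = B0 m AU)" if KU: "KU \<in> carrier_mat n n" for KU
  proof -
    define X where "X = Kt * KU * transpose_mat Kt"
    have Xc: "X \<in> carrier_mat n n" unfolding X_def using X[OF KU] .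
    have DX: "Kt * (K - KU) * transpose_mat Kt = D - X"
      unfolding D_def X_def by (rule congr_minus[OF Kt a(2) KU])
    have KUX: "Ki * X * transpose_mat Ki = KU" unfolding X_def by (rule congr_cancel[OF Ki Kt KU KiKt])
    have KKX: "Ki * (D - X) * transpose_mat Ki = K - KU" unfolding DX[symmetric]
      by (rule congr_cancel[OF Ki Kt _ KiKt], insert a(2) KU, auto)
    show ?thesis
    proof
      assume h: "psd_mat KU \<and> loewner_le KU K"
      then have pKU: "psd_mat KU" and pKK: "psd_mat (K - KU)" unfolding loewner_le_def by auto
      have pX: "psd_mat X" unfolding X_def by (rule psd_congr[OF KU pKU Kt])
      have pDX: "psd_mat (D - X)" unfolding DX[symmetric] by (rule psd_congr[OF _ pKK Kt], insert a(2) KU, auto)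
      have DXc: "D - X \<in> carrier_mat n n" using Dc Xc by simp
      have symX: "X $$ (j,i) = X $$ (i,j)" if "i < n" "j < n" for i j
        using pX Xc that unfolding psd_mat_def by (metis carrier_matD index_transpose_mat(1))
      have diag0: "X $$ (i,i) = 0" if i: "r \<le> i" "i < n" for i
      proof -
        have "0 \<le> unit_vec n i \<bullet> (X *\<^sub>v unit_vec n i)" using pX Xc unfolding psd_mat_def by auto
        then have g1: "0 \<le> X $$ (i,i)" using quad_unit[OF Xc i(2) i(2)] by simp
        have "0 \<le> unit_vec n i \<bullet> ((D - X) *\<^sub>v unit_vec n i)" using pDX DXc unfolding psd_mat_def by auto
        then have "0 \<le> (D - X) $$ (i,i)" using quad_unit[OF DXc i(2) i(2)] by simp
        then have g2: "0 \<le> - X $$ (i,i)" using Dii[OF i] i Dc Xc by simp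
        show ?thesis using g1 g2 by simp
      qed
      have zero: "X $$ (i,j) = 0" if ij: "i < n" "j < n" "r \<le> i \<or> r \<le> j" for i j
      proof (cases "r \<le> i")
        case True
        then show ?thesis using psd_zero_diag[OF Xc pX ij(1,2) diag0[OF True ij(1)]] by simp
      next
        case False
        then have "r \<le> j" using ij by simp
        then show ?thesis using psd_zero_diag[OF Xc pX ij(2,1) diag0[OF _ ij(2)]] symX[OF ij(1,2)] by simp
      qed
      define AU where "AU = mat r r (\<lambda>(i,j). X $$ (i,j))"
      have AU: "AU \<in> carrier_mat r r" unfolding AU_def by simp
      have XB: "X = B0 m AU"
        by (rule eq_matI, insert Xc nrm zero, auto simp: AU_def)
      have pAU: "psd_mat AU" using pX psd_block0[OF AU, of m] XB by simp
      have DXB: "D - X = B0 m (1\<^sub>m r - AU)"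
        unfolding D XB using AU by (intro eq_matI, auto)
      have "psd_mat (1\<^sub>m r - AU)" using pDX psd_block0[of "1\<^sub>m r - AU" r m] DXB AU by simp
      then have "loewner_le AU (1\<^sub>m r)" unfolding loewner_le_def using AU by simp
      then show "\<exists>AU \<in> carrier_mat r r. psd_mat AU \<and> loewner_le AU (1\<^sub>m r) \<and>
           Kt * KU * transpose_mat Kt = B0 m AU" using AU pAU XB unfolding X_def by blast
    next
      assume "\<exists>AU \<in> carrier_mat r r. psd_mat AU \<and> loewner_le AU (1\<^sub>m r) \<and>
           Kt * KU * transpose_mat Kt = B0 m AU"
      then obtain AU where AU: "AU \<in> carrier_mat r r" and pAU: "psd_mat AU" and lAU: "loewner_le AU (1\<^sub>m r)"
        and XB: "X = B0 m AU" unfolding X_def by blast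
      have p1AU: "psd_mat (1\<^sub>m r - AU)" using lAU unfolding loewner_le_def by simp
      have pX: "psd_mat X" unfolding XB using psd_block0[OF AU] pAU by simp
      have DXB: "D - X = B0 m (1\<^sub>m r - AU)"
        unfolding D XB using AU by (intro eq_matI, auto)
      have pDX: "psd_mat (D - X)" unfolding DXB using psd_block0[of "1\<^sub>m r - AU" r m] AU p1AU by simp
      have pKU: "psd_mat KU" unfolding KUX[symmetric] by (rule psd_congr[OF Xc pX Ki])
      have pKK: "psd_mat (K - KU)" unfolding KKX[symmetric] by (rule psd_congr[OF _ pDX Ki], insert Dc Xc, auto)
      show "psd_mat KU \<and> loewner_le KU K" using pKU pKK KU a(2) unfolding loewner_le_def by auto
    qed
  qed
  have inj: "transpose_mat Kt *\<^sub>v x \<noteq> 0\<^sub>v n" if x: "x \<in> carrier_vec n" "x \<noteq> 0\<^sub>v n" for x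
  proof
    assume z: "transpose_mat Kt *\<^sub>v x = 0\<^sub>v n"
    have T: "transpose_mat Ki * transpose_mat Kt = 1\<^sub>m n"
      using transpose_mult[OF Kt Ki] KtKi by simp
    have "x = (transpose_mat Ki * transpose_mat Kt) *\<^sub>v x" unfolding T using x by simp
    also have "\<dots> = transpose_mat Ki *\<^sub>v (transpose_mat Kt *\<^sub>v x)" using Ki Kt x by simp
    also have "\<dots> = 0\<^sub>v n" unfolding z using Ki by (intro eq_vecI, auto)
    finally show False using x by simp
  qed
  have pSt1: "pd_mat St1" unfolding a(19) by (rule pd_congr[OF a(4) a(5) Kt inj])
  have pSt2: "pd_mat St2" unfolding a(20) by (rule pd_congr[OF a(6) a(7) Kt inj])
  have St1: "St1 \<in> carrier_mat (r+m) (r+m)" unfolding a(19) using X[OF a(4)] nrm by simp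
  have St2: "St2 \<in> carrier_mat (r+m) (r+m)" unfolding a(20) using X[OF a(6)] nrm by simp
  have dKt: "det Kt * det Kt > 0"
  proof -
    have "det Kt * det Ki = 1" using det_mult[OF Kt Ki] KtKi by simp
    then have "det Kt \<noteq> 0" by auto
    then show ?thesis using not_real_square_gt_zero by blast
  qed
  have key: "ln (det (KU + Sigma)) = ln (det (lowblk r St)) + ln (det (AU + schur_top r St)) - ln (det Kt * det Kt)"
    if KU: "KU \<in> carrier_mat n n" and pKU: "psd_mat KU" and AU: "AU \<in> carrier_mat r r"
      and XB: "Kt * KU * transpose_mat Kt = B0 m AU"
      and S: "Sigma \<in> carrier_mat n n" "pd_mat Sigma" and StD: "St = Kt * Sigma * transpose_mat Kt"
      and pSt: "pd_mat St" and Stc: "St \<in> carrier_mat (r+m) (r+m)"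
    for KU AU Sigma St
  proof -
    note sb = schur_block_det[OF Stc pSt AU]
    have "KU + Sigma \<in> carrier_mat n n" using S(1) by simp
    then have "det (KU + Sigma) > 0" by (rule pd_det_pos[OF _ psd_pd_add[OF KU S(1) pKU S(2)]])
    moreover have "det Kt * det Kt * det (KU + Sigma) = det (lowblk r St) * det (AU + schur_top r St)"
    proof -
      have "Kt * (KU + Sigma) * transpose_mat Kt = B0 m AU + St"
        unfolding congr_plus[OF Kt KU S(1)] XB StD ..
      then have "det Kt * det (KU + Sigma) * det Kt = det (B0 m AU + St)"
        using det_congr[OF Kt, of "KU + Sigma"] S(1) by simp
      then show ?thesis using sb(1) by (simp add: ac_simps)
    qed
    ultimately show ?thesis using dKt sb(2)
      by (smt (verit, ccfv_threshold) ln_mult mult_pos_pos zero_less_mult_iff)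
  qed
  define c where "c = ln (det (lowblk r St1)) - lam * ln (det (lowblk r St2)) - (1 - lam) * ln (det Kt * det Kt)"
  show ?thesis
    unfolding m_def[symmetric]
  proof
    show "\<forall>KU\<in>carrier_mat n n. (psd_mat KU \<and> loewner_le KU K) =
        (\<exists>AU\<in>carrier_mat r r. psd_mat AU \<and> loewner_le AU (1\<^sub>m r) \<and>
          Kt * KU * transpose_mat Kt = four_block_mat AU (0\<^sub>m r m) (0\<^sub>m m r) (0\<^sub>m m m))"
      using part1 B0eq by (metis (no_types, lifting))
    show "\<exists>c. \<forall>KU\<in>carrier_mat n n. \<forall>AU\<in>carrier_mat r r. psd_mat KU \<and> loewner_le KU K \<and>
        psd_mat AU \<and> loewner_le AU (1\<^sub>m r) \<and>
        Kt * KU * transpose_mat Kt = four_block_mat AU (0\<^sub>m r m) (0\<^sub>m m r) (0\<^sub>m m m) \<longrightarrow>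
        ln (det (KU + Sigma1)) - lam * ln (det (KU + Sigma2)) =
        ln (det (AU + Sh1)) - lam * ln (det (AU + Sh2)) + c"
    proof (intro exI[of _ c] ballI impI)
      fix KU AU assume KU: "KU \<in> carrier_mat n n" and AU: "AU \<in> carrier_mat r r"
        and h: "psd_mat KU \<and> loewner_le KU K \<and> psd_mat AU \<and> loewner_le AU (1\<^sub>m r) \<and>
        Kt * KU * transpose_mat Kt = four_block_mat AU (0\<^sub>m r m) (0\<^sub>m m r) (0\<^sub>m m m)"
      have XB: "Kt * KU * transpose_mat Kt = B0 m AU" using h B0eq[OF AU] by simp
      have k1: "ln (det (KU + Sigma1)) = ln (det (lowblk r St1)) + ln (det (AU + Sh1)) - ln (det Kt * det Kt)"
        unfolding a(21) by (rule key[OF KU _ AU XB a(4) a(5) a(19) pSt1 St1], insert h, simp)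
      have k2: "ln (det (KU + Sigma2)) = ln (det (lowblk r St2)) + ln (det (AU + Sh2)) - ln (det Kt * det Kt)"
        unfolding a(22) by (rule key[OF KU _ AU XB a(6) a(7) a(20) pSt2 St2], insert h, simp)
      show "ln (det (KU + Sigma1)) - lam * ln (det (KU + Sigma2)) =
        ln (det (AU + Sh1)) - lam * ln (det (AU + Sh2)) + c"
        unfolding k1 k2 c_def by (simp add: algebra_simps)
    qed
  qed
qed

end
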